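(* Let $k$ be a positive integer, let $n_1,\ldots,n_k,d_1,\ldots,d_k$ be positive integers, and let $r_1,\ldots,r_k$ be integers with $0\le r_i\le d_i$ for all $i$ and $0<\sum_i r_i<\sum_i d_i$. Suppose one of the following holds: (1) $k=1$, $n_1,d_1\ge 2$, and $(n_1,d_1)\neq(2,2)$; (2) $k=2$, and if $n_1=n_2=1$ then $d_1,d_2\ge 2$; (3) $k\ge 3$. Then $$\prod_{i=1}^k\binom{n_i+r_i}{n_i}+\prod_{i=1}^k\binom{n_i+d_i-r_i}{n_i}<\prod_{i=1}^k\binom{n_i+d_i}{n_i}.$$ *)

theory Defs
  imports Main
begin

end

theory Submission
  imports Defs
begin

lemma choose_top_mono_Suc: "((m::nat) choose j) \<le> Suc m choose j"
  by (cases j) auto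

lemma choose_top_mono: "(m::nat) \<le> m' \<Longrightarrow> m choose j \<le> m' choose j"
  by (rule lift_Suc_mono_le[of "\<lambda>m. m choose j"]) (auto simp: choose_top_mono_Suc)

lemma choose_incr:
  assumes "n \<ge> 1"
  shows "((n + Suc m) choose n) = ((n + m) choose n) + ((n + m) choose (n - 1))"
proof -
  obtain n' where n: "n = Suc n'" using assms by (cases n) auto
  show ?thesis by (simp add: n)
qed

lemma choose_ge:
  assumes "(j::nat) \<ge> 1" "u \<ge> 1"
  shows "j + u \<le> ((j + u) choose j)"
  using assms(2)
proof (induction u rule: dec_induct)
  case base
  then show ?case using binomial_symmetric[of j "j+1"] by simp
next
  case (step u)
  have "((j + Suc u) choose j) = ((j + u) choose j) + ((j + u) choose (j - 1))"
    using choose_incr[OF assms(1)] by simp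
  moreover have "((j + u) choose (j - 1)) \<ge> 1" using zero_less_binomial[of "j-1" "j+u"] by linarith
  ultimately show ?case using step.IH by simp
qed

lemma conv:
  assumes "n \<ge> 1" "s \<le> t"
  shows "((n + s) choose n) + ((n + t) choose n) \<le> 1 + ((n + (s + t)) choose n)"
  using assms(2)
proof (induction s arbitrary: t)
  case 0
  then show ?case by simp
next
  case (Suc s)
  have IH: "((n + s) choose n) + ((n + Suc t) choose n) \<le> 1 + ((n + (Suc s + t)) choose n)"
    using Suc.IH[of "Suc t"] Suc.prems by simp
  have "((n + Suc s) choose n) = ((n + s) choose n) + ((n + s) choose (n - 1))"
    using choose_incr[OF assms(1)] by simp
  moreover have "((n + Suc t) choose n) = ((n + t) choose n) + ((n + t) choose (n - 1))"
    using choose_incr[OF assms(1)] by simp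
  moreover have "((n + s) choose (n - 1)) \<le> ((n + t) choose (n - 1))"
    using Suc.prems by (intro choose_top_mono) simp
  ultimately show ?case using IH by linarith
qed

lemma strict:
  assumes "n \<ge> 1" "1 \<le> s" "s \<le> t"
  shows "((n + s) choose n) + ((n + t) choose n) + ((n + t) choose (n - 1)) \<le> 1 + n + ((n + (s + t)) choose n)"
  using assms(2,3)
proof (induction s arbitrary: t)
  case 0
  then show ?case by simp
next
  case (Suc s)
  show ?case
  proof (cases "s = 0")
    case True
    then show ?thesis using choose_incr[OF assms(1), of t] choose_incr[OF assms(1), of 0] by simp
  next
    case False
    have IH: "((n + s) choose n) + ((n + Suc t) choose n) + ((n + Suc t) choose (n - 1)) \<le> 1 + n + ((n + (Suc s + t)) choose n)"
      using Suc.IH[of "Suc t"] Suc.prems False by simp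
    have "((n + Suc s) choose n) = ((n + s) choose n) + ((n + s) choose (n - 1))"
      using choose_incr[OF assms(1)] by simp
    moreover have "((n + Suc t) choose n) = ((n + t) choose n) + ((n + t) choose (n - 1))"
      using choose_incr[OF assms(1)] by simp
    moreover have "((n + s) choose (n - 1)) \<le> ((n + t) choose (n - 1))"
      using Suc.prems by (intro choose_top_mono) simp
    moreover have "((n + t) choose (n - 1)) \<le> ((n + Suc t) choose (n - 1))"
      by (intro choose_top_mono) simp
    ultimately show ?thesis using IH by linarith
  qed
qed


lemma arithN:
  fixes a b c P Q R :: nat
  assumes "1 \<le> a" "1 \<le> b" "a + b \<le> c + 1" "1 \<le> P" "1 \<le> Q" "P + Q \<le> R + 1"
  shows "a * P + b * Q + (a - 1) * (Q - 1) + (b - 1) * (P - 1) \<le> c * R + 1"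
proof -
  obtain a' b' P' Q' where e: "a = Suc a'" "b = Suc b'" "P = Suc P'" "Q = Suc Q'"
    using assms by (metis Suc_le_D One_nat_def Suc_le_mono)
  have "(a' + b' + 1) * (P' + Q' + 1) \<le> c * R"
    using assms e by (intro mult_le_mono) auto
  moreover have "(a' + b' + 1) * (P' + Q' + 1) + 1 = (a'+1)*(P'+1) + (b'+1)*(Q'+1) + a'*Q' + b'*P'"
    by (simp add: algebra_simps)
  ultimately show ?thesis using e by simp
qed

lemma prod_bound:
  fixes a b c :: "'i \<Rightarrow> nat"
  assumes "finite I" "\<forall>i\<in>I. 1 \<le> a i \<and> 1 \<le> b i \<and> a i + b i \<le> c i + 1"
  shows "prod a I + prod b I \<le> prod c I + 1"
  using assms
proof (induction I rule: finite_induct)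
  case empty
  then show ?case by simp
next
  case (insert x F)
  have "1 \<le> prod a F" "1 \<le> prod b F" using insert(4) by (intro prod_ge_1; auto)+
  then show ?case using insert arithN[of "a x" "b x" "c x" "prod a F" "prod b F" "prod c F"] by simp
qed

lemma key:
  fixes a b c :: "'i \<Rightarrow> nat"
  assumes "finite J" "finite K" "J \<inter> K = {}"
    "\<forall>i\<in>J \<union> K. 1 \<le> a i \<and> 1 \<le> b i \<and> a i + b i \<le> c i + 1"
  shows "prod a (J \<union> K) + prod b (J \<union> K) + (prod a J - 1) * (prod b K - 1) + (prod b J - 1) * (prod a K - 1)
    \<le> prod c (J \<union> K) + 1"
proof -
  have J: "prod a J + prod b J \<le> prod c J + 1" using assms by (intro prod_bound) auto
  have K: "prod a K + prod b K \<le> prod c K + 1" using assms by (intro prod_bound) auto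
  have "1 \<le> prod a J" "1 \<le> prod b J" "1 \<le> prod a K" "1 \<le> prod b K" using assms(4) by (intro prod_ge_1; auto)+
  then show ?thesis using assms J K arithN[of "prod a J" "prod b J" "prod c J" "prod a K" "prod b K" "prod c K"]
    by (simp add: prod.union_disjoint)
qed

lemma prod_ge_pow:
  fixes g :: "'i \<Rightarrow> nat"
  assumes "finite A" "\<forall>i\<in>A. 2 \<le> g i"
  shows "2 ^ card A \<le> prod g A"
proof -
  have "prod (\<lambda>_. 2) A \<le> prod g A" using assms by (intro prod_mono) auto
  then show ?thesis by simp
qed

lemma pow_arith:
  fixes X Y p q :: nat
  assumes "1 \<le> p" "1 \<le> q" "3 \<le> p + q" "2 ^ p \<le> X" "2 ^ q \<le> Y"
  shows "2 \<le> (X - 1) * (Y - 1)"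
proof -
  have "(2::nat) ^ 1 \<le> 2 ^ p" "(2::nat) ^ 1 \<le> 2 ^ q" using assms by (intro power_increasing; simp)+
  have "2 \<le> p \<or> 2 \<le> q" using assms by linarith
  then have "(2::nat) ^ 2 \<le> 2 ^ p \<or> (2::nat) ^ 2 \<le> 2 ^ q"
    by (metis power_increasing one_le_numeral)
  then have "(4 \<le> X \<and> 2 \<le> Y) \<or> (2 \<le> X \<and> 4 \<le> Y)" using assms \<open>(2::nat) ^ 1 \<le> 2 ^ p\<close> \<open>(2::nat) ^ 1 \<le> 2 ^ q\<close> by auto
  then show ?thesis
  proof
    assume h: "4 \<le> X \<and> 2 \<le> Y"
    have "3 * 1 \<le> (X - 1) * (Y - 1)" using h by (intro mult_le_mono) auto
    then show ?thesis by simp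
  next
    assume h: "2 \<le> X \<and> 4 \<le> Y"
    have "1 * 3 \<le> (X - 1) * (Y - 1)" using h by (intro mult_le_mono) auto
    then show ?thesis by simp
  qed
qed

lemma small_prod:
  fixes u v w z :: nat
  assumes "u * v + w * z < 2"
  shows "((u = 0 \<or> v = 0) \<and> (w = 0 \<or> z = 0)) \<or> (u = 1 \<and> v = 1 \<and> (w = 0 \<or> z = 0)) \<or> ((u = 0 \<or> v = 0) \<and> w = 1 \<and> z = 1)"
proof -
  have "u * v \<le> 1" "w * z \<le> 1" using assms by linarith+
  moreover have "u * v \<le> 1 \<Longrightarrow> u = 0 \<or> v = 0 \<or> (u = 1 \<and> v = 1)" for u v :: nat
    by (metis One_nat_def le_0_eq le_Suc_eq mult_eq_1_iff mult_is_0)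
  ultimately have A: "u = 0 \<or> v = 0 \<or> (u = 1 \<and> v = 1)" "w = 0 \<or> z = 0 \<or> (w = 1 \<and> z = 1)" by blast+
  show ?thesis using A assms by auto
qed


lemma k1_case:
  fixes n d r :: nat
  assumes "2 \<le> n" "2 \<le> d" "(n, d) \<noteq> (2, 2)" "0 < r" "r < d"
  shows "((n + r) choose n) + ((n + (d - r)) choose n) < ((n + d) choose n)"
proof -
  define s where "s = min r (d - r)"
  define t where "t = max r (d - r)"
  have st: "1 \<le> s" "s \<le> t" "s + t = d" using assms by (auto simp: s_def t_def)
  have sum_eq: "((n + r) choose n) + ((n + (d - r)) choose n) = ((n + s) choose n) + ((n + t) choose n)"
    by (cases "r \<le> d - r") (auto simp: s_def t_def max_def min_def)
  have S: "((n + s) choose n) + ((n + t) choose n) + ((n + t) choose (n - 1)) \<le> 1 + n + ((n + (s + t)) choose n)"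
    using strict[of n s t] st assms by simp
  have big: "n + 2 \<le> ((n + t) choose (n - 1))"
  proof (cases "t \<ge> 2")
    case True
    have "(n - 1) + (t + 1) \<le> (((n - 1) + (t + 1)) choose (n - 1))"
      using assms by (intro choose_ge) auto
    moreover have "(n - 1) + (t + 1) = n + t" using assms by simp
    ultimately show ?thesis using True by simp
  next
    case False
    then have "t = 1" "s = 1" using st by auto
    then have "d = 2" using st by simp
    then have n3: "n \<ge> 3" using assms by auto
    have "((n + 1) choose (n - 1)) = ((n + 1) choose 2)"
      using binomial_symmetric[of "n - 1" "n + 1"] n3 by (simp add: Suc_diff_le numeral_2_eq_2)
    also have "\<dots> = (n + 1) * n div 2" by (simp add: choose_two)
    finally have e: "((n + 1) choose (n - 1)) = (n + 1) * n div 2" .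
    have "3 * n \<le> n * n" using n3 by (intro mult_le_mono) auto
    moreover have "(n + 1) * n = n * n + n" by (simp add: algebra_simps)
    ultimately have "2 * (n + 2) \<le> (n + 1) * n" using n3 by (simp only: ) arith
    then have "n + 2 \<le> (n + 1) * n div 2" using div_le_mono[of "2 * (n + 2)" "(n + 1) * n" 2] by simp
    then show ?thesis using e \<open>t = 1\<close> by simp
  qed
  show ?thesis using sum_eq S big st by simp
qed


lemma hlem:
  fixes a n r :: nat
  assumes "r = 0 \<Longrightarrow> a = 1" "1 \<le> r \<Longrightarrow> n + r \<le> a" "1 \<le> n"
  shows "(a - 1 = 0) = (r = 0)" "a - 1 = 1 \<longrightarrow> n = 1 \<and> r = 1"
proof -
  show "(a - 1 = 0) = (r = 0)" using assms by (cases "r = 0") auto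
  show "a - 1 = 1 \<longrightarrow> n = 1 \<and> r = 1" using assms by (cases "r = 0") auto
qed

lemma two_case:
  fixes x1 x2 y1 y2 n1 n2 r1 r2 d1 d2 :: nat
  assumes h1: "(x1 = 0) = (r1 = 0)" "x1 = 1 \<longrightarrow> n1 = 1 \<and> r1 = 1"
    and h2: "(x2 = 0) = (r2 = 0)" "x2 = 1 \<longrightarrow> n2 = 1 \<and> r2 = 1"
    and h3: "(y1 = 0) = (d1 - r1 = 0)" "y1 = 1 \<longrightarrow> n1 = 1 \<and> d1 - r1 = 1"
    and h4: "(y2 = 0) = (d2 - r2 = 0)" "y2 = 1 \<longrightarrow> n2 = 1 \<and> d2 - r2 = 1"
    and s: "0 < r1 + r2" "r1 + r2 < d1 + d2"
    and tw: "n1 = 1 \<and> n2 = 1 \<longrightarrow> d1 \<ge> 2 \<and> d2 \<ge> 2"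
    and nn: "r1 \<le> d1" "r2 \<le> d2" "1 \<le> d1" "1 \<le> d2"
  shows "2 \<le> x1 * y2 + y1 * x2"
proof (rule ccontr)
  assume "\<not> ?thesis"
  then have "x1 * y2 + y1 * x2 < 2" by simp
  from small_prod[OF this] consider
      "x1 = 0 \<or> y2 = 0" "y1 = 0 \<or> x2 = 0"
    | "x1 = 1" "y2 = 1" "y1 = 0 \<or> x2 = 0"
    | "x1 = 0 \<or> y2 = 0" "y1 = 1" "x2 = 1" by blast
  then show False
  proof cases
    case 1
    then show False using h1 h2 h3 h4 s nn by auto
  next
    case 2
    then show False using h1 h2 h3 h4 s nn tw by auto
  next
    case 3
    then show False using h1 h2 h3 h4 s nn tw by auto
  qed
qed
theorem lemma2p2:
  fixes k :: nat and n d r :: "nat \<Rightarrow> nat"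
  assumes "k \<ge> 1"
    and "\<forall>i\<in>{1..k}. n i \<ge> 1 \<and> d i \<ge> 1 \<and> r i \<le> d i"
    and "0 < (\<Sum>i=1..k. r i)" and "(\<Sum>i=1..k. r i) < (\<Sum>i=1..k. d i)"
    and "(k = 1 \<and> n 1 \<ge> 2 \<and> d 1 \<ge> 2 \<and> (n 1, d 1) \<noteq> (2, 2))
       \<or> (k = 2 \<and> (n 1 = 1 \<and> n 2 = 1 \<longrightarrow> d 1 \<ge> 2 \<and> d 2 \<ge> 2))
       \<or> k \<ge> 3"
  shows "(\<Prod>i=1..k. (n i + r i) choose (n i)) + (\<Prod>i=1..k. (n i + d i - r i) choose (n i))
         < (\<Prod>i=1..k. (n i + d i) choose (n i))"
proof -
  define a where "a i = ((n i + r i) choose n i)" for i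
  define b where "b i = ((n i + (d i - r i)) choose n i)" for i
  define c where "c i = ((n i + d i) choose n i)" for i
  note H = assms(2)
  have eqa: "(\<Prod>i=1..k. (n i + r i) choose (n i)) = prod a {1..k}" by (simp add: a_def)
  have eqc: "(\<Prod>i=1..k. (n i + d i) choose (n i)) = prod c {1..k}" by (simp add: c_def)
  have eqb: "(\<Prod>i=1..k. (n i + d i - r i) choose (n i)) = prod b {1..k}"
    using H by (intro prod.cong) (auto simp: b_def)
  have F: "\<forall>i\<in>{1..k}. 1 \<le> a i \<and> 1 \<le> b i \<and> a i + b i \<le> c i + 1"
  proof
    fix i assume i: "i \<in> {1..k}"
    have "0 < a i" "0 < b i" by (auto simp: a_def b_def)
    moreover have "a i + b i \<le> c i + 1"
    proof (cases "r i \<le> d i - r i")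
      case True
      then show ?thesis using conv[of "n i" "r i" "d i - r i"] H i by (simp add: a_def b_def c_def)
    next
      case False
      then show ?thesis using conv[of "n i" "d i - r i" "r i"] H i by (simp add: a_def b_def c_def)
    qed
    ultimately show "1 \<le> a i \<and> 1 \<le> b i \<and> a i + b i \<le> c i + 1" by simp
  qed
  have Fa0: "a i = 1" if "r i = 0" for i using that by (simp add: a_def)
  have Fa1: "n i + r i \<le> a i" if "i \<in> {1..k}" "r i \<ge> 1" for i
    using that H choose_ge[of "n i" "r i"] by (simp add: a_def)
  have Fb0: "b i = 1" if "r i = d i" for i using that by (simp add: b_def)
  have Fb0': "b i = 1" if "d i - r i = 0" for i using that by (simp add: b_def)
  have Fb1: "n i + (d i - r i) \<le> b i" if "i \<in> {1..k}" "d i - r i \<ge> 1" for i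
    using that H choose_ge[of "n i" "d i - r i"] by (simp add: b_def)
  have Fc1: "n i + d i \<le> c i" if "i \<in> {1..k}" for i
    using that H choose_ge[of "n i" "d i"] by (simp add: c_def)
  have Fbc: "b i = c i" if "r i = 0" for i using that by (simp add: b_def c_def)
  have Fac: "a i = c i" if "r i = d i" for i using that by (simp add: a_def c_def)
  have main: "prod a {1..k} + prod b {1..k} < prod c {1..k}"
  proof -
    consider (one) "k = 1" "n 1 \<ge> 2" "d 1 \<ge> 2" "(n 1, d 1) \<noteq> (2, 2)"
      | (two) "k = 2" "n 1 = 1 \<and> n 2 = 1 \<longrightarrow> d 1 \<ge> 2 \<and> d 2 \<ge> 2"
      | (three) "k \<ge> 3" using assms(5) by blast
    then show ?thesis
    proof cases
      case one
      have "0 < r 1" "r 1 < d 1" using assms(3,4) one by auto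
      then show ?thesis using k1_case[of "n 1" "d 1" "r 1"] one by (simp add: a_def b_def c_def)
    next
      case two
      have U: "{1..k} = {1} \<union> {2}" using two by auto
      have K: "prod a {1..k} + prod b {1..k} + (a 1 - 1) * (b 2 - 1) + (b 1 - 1) * (a 2 - 1) \<le> prod c {1..k} + 1"
        using key[of "{1}" "{2}" a b c] F U by simp
      have s: "0 < r 1 + r 2" "r 1 + r 2 < d 1 + d 2" using assms(3,4) two
        by (simp_all add: numeral_2_eq_2)
      have i12: "1 \<in> {1..k}" "2 \<in> {1..k}" using two by auto
      have nn: "1 \<le> n 1" "1 \<le> n 2" "r 1 \<le> d 1" "r 2 \<le> d 2" "1 \<le> d 1" "1 \<le> d 2" using H i12 by auto
      have h1: "(a 1 - 1 = 0) = (r 1 = 0)" "a 1 - 1 = 1 \<longrightarrow> n 1 = 1 \<and> r 1 = 1"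
        using hlem[OF Fa0[of 1] Fa1[OF i12(1)] nn(1)] by blast+
      have h2: "(a 2 - 1 = 0) = (r 2 = 0)" "a 2 - 1 = 1 \<longrightarrow> n 2 = 1 \<and> r 2 = 1"
        using hlem[OF Fa0[of 2] Fa1[OF i12(2)] nn(2)] by blast+
      have h3: "(b 1 - 1 = 0) = (d 1 - r 1 = 0)" "b 1 - 1 = 1 \<longrightarrow> n 1 = 1 \<and> d 1 - r 1 = 1"
        using hlem[OF Fb0'[of 1] Fb1[OF i12(1)] nn(1)] by blast+
      have h4: "(b 2 - 1 = 0) = (d 2 - r 2 = 0)" "b 2 - 1 = 1 \<longrightarrow> n 2 = 1 \<and> d 2 - r 2 = 1"
        using hlem[OF Fb0'[of 2] Fb1[OF i12(2)] nn(2)] by blast+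
      have tw: "n 1 = 1 \<and> n 2 = 1 \<longrightarrow> d 1 \<ge> 2 \<and> d 2 \<ge> 2" using two by simp
      have "2 \<le> (a 1 - 1) * (b 2 - 1) + (b 1 - 1) * (a 2 - 1)"
        using two_case[OF h1 h2 h3 h4 s tw nn(3-6)] .
      then show ?thesis using K by linarith
    next
      case three
      have fin: "finite {1..k}" by simp
      define J where "J = {i\<in>{1..k}. 0 < r i}"
      define K where "K = {i\<in>{1..k}. r i = 0}"
      show ?thesis
      proof (cases "K = {}")
        case False
        have JK: "J \<union> K = {1..k}" "J \<inter> K = {}" "finite J" "finite K" by (auto simp: J_def K_def)
        have "J \<noteq> {}"
        proof
          assume "J = {}"
          then have "\<forall>i\<in>{1..k}. r i = 0" by (auto simp: J_def)
          then show False using assms(3) by simp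
        qed
        have cards: "card J + card K = k" using JK card_Un_disjoint[of J K] by simp
        have cJ: "1 \<le> card J" "1 \<le> card K" using JK \<open>J \<noteq> {}\<close> False by (auto simp: Suc_le_eq card_gt_0_iff)
        have pK: "prod a K = 1" by (intro prod.neutral) (simp add: K_def Fa0)
        have qK: "prod b K = prod c K" by (intro prod.cong refl) (simp add: K_def Fbc)
        have X: "2 ^ card J \<le> prod a J"
        proof (intro prod_ge_pow ballI)
          fix i assume "i \<in> J"
          then have "i \<in> {1..k}" "1 \<le> r i" by (auto simp: J_def)
          then show "2 \<le> a i" using Fa1[of i] H by force
        qed (rule JK)
        have Y: "2 ^ card K \<le> prod c K"
        proof (intro prod_ge_pow ballI)
          fix i assume "i \<in> K"
          then have "i \<in> {1..k}" by (auto simp: K_def)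
          then show "2 \<le> c i" using Fc1[of i] H by force
        qed (rule JK)
        have "2 \<le> (prod a J - 1) * (prod c K - 1)"
          using pow_arith[OF cJ _ X Y] cards three by simp
        then show ?thesis using key[of J K a b c] JK F pK qK by simp
      next
        case Kempty: True
        define J' where "J' = {i\<in>{1..k}. r i < d i}"
        define K' where "K' = {i\<in>{1..k}. r i = d i}"
        show ?thesis
        proof (cases "K' = {}")
          case False
          have JK: "J' \<union> K' = {1..k}" "J' \<inter> K' = {}" "finite J'" "finite K'"
            using H by (auto simp: J'_def K'_def)
          have "J' \<noteq> {}"
          proof
            assume "J' = {}"
            then have "\<forall>i\<in>{1..k}. r i = d i" using H by (force simp: J'_def)
            then show False using assms(4) by simp
          qed
          have cards: "card J' + card K' = k" using JK card_Un_disjoint[of J' K'] by simp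
          have cJ: "1 \<le> card J'" "1 \<le> card K'" using JK \<open>J' \<noteq> {}\<close> False by (auto simp: Suc_le_eq card_gt_0_iff)
          have pK: "prod b K' = 1" by (intro prod.neutral) (simp add: K'_def Fb0)
          have qK: "prod a K' = prod c K'" by (intro prod.cong refl) (simp add: K'_def Fac)
          have X: "2 ^ card J' \<le> prod b J'"
          proof (intro prod_ge_pow ballI)
            fix i assume "i \<in> J'"
            then have "i \<in> {1..k}" "1 \<le> d i - r i" by (auto simp: J'_def)
            then show "2 \<le> b i" using Fb1[of i] H by force
          qed (rule JK)
          have Y: "2 ^ card K' \<le> prod c K'"
          proof (intro prod_ge_pow ballI)
            fix i assume "i \<in> K'"
            then have "i \<in> {1..k}" by (auto simp: K'_def)
            then show "2 \<le> c i" using Fc1[of i] H by force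
          qed (rule JK)
          have "2 \<le> (prod b J' - 1) * (prod c K' - 1)"
            using pow_arith[OF cJ _ X Y] cards three by simp
          then show ?thesis using key[of J' K' a b c] JK F pK qK by simp
        next
          case True
          have all: "0 < r i \<and> r i < d i" if "i \<in> {1..k}" for i
          proof -
            have "i \<notin> K" "i \<notin> K'" using Kempty True by auto
            then have "r i \<noteq> 0" "r i \<noteq> d i" using that by (auto simp: K_def K'_def)
            moreover have "r i \<le> d i" using that H by auto
            ultimately show ?thesis by simp
          qed
          have JK: "{1} \<union> {2..k} = {1..k}" "{1} \<inter> {2..k} = {}" using three by auto
          have cK: "card {2..k} = k - 1" by simp
          have X: "2 ^ 1 \<le> a 1" using Fa1[of 1] all[of 1] H three by force
          have Y: "2 ^ card {2..k} \<le> prod b {2..k}"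
          proof (intro prod_ge_pow ballI)
            fix i assume i: "i \<in> {2..k}"
            then have "i \<in> {1..k}" by auto
            then show "2 \<le> b i" using Fb1[of i] all[of i] H by force
          qed simp
          have "2 \<le> (a 1 - 1) * (prod b {2..k} - 1)"
            using pow_arith[of 1 "card {2..k}" "a 1" "prod b {2..k}"] X Y cK three by simp
          moreover have "prod a ({1} \<union> {2..k}) + prod b ({1} \<union> {2..k}) + (prod a {1} - 1) * (prod b {2..k} - 1)
              + (prod b {1} - 1) * (prod a {2..k} - 1) \<le> prod c ({1} \<union> {2..k}) + 1"
            by (rule key) (use JK F in auto)
          ultimately show ?thesis unfolding JK(1) by simp
        qed
      qed
    qed
  qed
  show ?thesis using main eqa eqb eqc by simp
qed

end
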